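(* Let $H_\varepsilon=T_\varepsilon+V_\varepsilon$ be as in the context. For $x\in(\varepsilon\mathbb Z)^d$, $R>0$ let $B_x(R)=\{y\in(\varepsilon\mathbb Z)^d:|x-y|<R\}$, $\Lambda_R(x,H_\varepsilon):=\inf\{\langle H_\varepsilon\phi,\phi\rangle/\|\phi\|^2_{\ell^2}:\phi\in c_0(B_x(R)),\phi\ne0\}$, and $$\Sigma(H_\varepsilon):=\sup_{K\subset(\varepsilon\mathbb Z)^d\text{ finite}}\inf\Big\{\frac{\langle H_\varepsilon\phi,\phi\rangle}{\|\phi\|^2_{\ell^2}}:\ \phi\in c_0((\varepsilon\mathbb Z)^d\setminus K),\ \phi\ne0\Big\}.$$ Then $$\Sigma(H_\varepsilon)=\lim_{R\to+\infty}\liminf_{|x|\to\infty}\Lambda_R(x,H_\varepsilon).$$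
   Context: Let $d\ge1$, $\varepsilon\in(0,1]$, $\ell^2((\varepsilon\mathbb Z)^d)$ with $\langle u,v\rangle=\sum_x\bar u(x)v(x)$, $(\tau_\gamma u)(x)=u(x+\gamma)$. For $D\subset(\varepsilon\mathbb Z)^d$, $c_0(D)$ is the space of real-valued functions on $(\varepsilon\mathbb Z)^d$ with finite support contained in $D$. (a) Coefficients $a_\gamma(x,\varepsilon)\in\mathbb R$ ($\gamma\in(\varepsilon\mathbb Z)^d$, $x\in\mathbb R^d$) with: (i) $a_\gamma=a^{(0)}_\gamma(x)+\varepsilon a^{(1)}_\gamma(x)+R^{(2)}_\gamma(x,\varepsilon)$, $a^{(j)}_\gamma\in C^\infty$, $|a^{(j)}_\gamma(x)-a^{(j)}_\gamma(x+h)|=O(|h|)$ uniformly in $\gamma,x$, $R^{(2)}_\gamma\in C^\infty(\mathbb R^d\times(0,1])$; (ii) $\sum_\gamma a^{(0)}_\gamma=0$, $a^{(0)}_\gamma\le0$ for $\gamma\ne0$; (iii) $a_\gamma(x,\varepsilon)=a_{-\gamma}(x+\gamma,\varepsilon)$; (iv) for all $n\in\mathbb N,\alpha\in\mathbb N^d$, $\|\,|\cdot/\varepsilon|^n\partial^\alpha_xa^{(j)}_\cdot(x)\|_{\ell^2_\gamma}\le C$ and $\|\,|\cdot/\varepsilon|^n\partial^\alpha_xR^{(2)}_\cdot(x,\varepsilon)\|_{\ell^2_\gamma}\le C\varepsilon^2$ uniformly; (v) $\mathrm{span}\{\gamma:a^{(0)}_\gamma(x)<0\}=\mathbb R^d$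 for all $x$. $T_\varepsilon=\sum_\gamma a_\gamma(\cdot,\varepsilon)\tau_\gamma$. (b) $V_\varepsilon$ is the restriction to $(\varepsilon\mathbb Z)^d$ of $\hat V_\varepsilon=V_0+\varepsilon V_1+R_2(\cdot;\varepsilon)\in C^\infty(\mathbb R^d)$, $V_0,V_1\in C^\infty$, $R_2\in C^\infty(\mathbb R^d\times(0,\varepsilon_0])$, $\sup_K|R_2|\le C_K\varepsilon^2$ on compacts $K$; $V_\varepsilon$ polynomially bounded and $V_\varepsilon(x)>C>0$ for $|x|\ge R$, $\varepsilon\le\varepsilon_0$; $V_0\ge0$, vanishing exactly at finitely many points $x_1,\dots,x_m$ with positive definite Hessians. (c) $t_0(x_j,\xi):=\sum_\gamma a^{(0)}_\gamma(x_j)e^{-i\gamma\cdot\xi/\varepsilon}>0$ for $\xi\notin2\pi\mathbb Z^d$. $H_\varepsilon$ is the self-adjoint realization of $T_\varepsilon+V_\varepsilon$ on the maximal domain of multiplication by $V_\varepsilon$. *)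

theory Defs
  imports "HOL-Analysis.Analysis"
begin

section \<open>Lattice (eps Z)^d, indexed by integer vectors k (lattice point = eps * k)\<close>

definition rvec :: "int ^ 'n \<Rightarrow> real ^ 'n" where
  "rvec k = (\<chi> i. real_of_int (k $ i))"

definition pdir :: "'a set \<Rightarrow> 'a \<Rightarrow> ('a::real_normed_vector \<Rightarrow> real) \<Rightarrow> 'a \<Rightarrow> real" where
  "pdir S v f x = frechet_derivative f (at x within S) v"

fun pds :: "'a set \<Rightarrow> 'a list \<Rightarrow> ('a::real_normed_vector \<Rightarrow> real) \<Rightarrow> 'a \<Rightarrow> real" where
  "pds S [] f = f"
| "pds S (v # vs) f = pdir S v (pds S vs f)"

text \<open>A multi-index derivative \<open>\<partial>^\<alpha>\<close> is a list of basis directions.\<close>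
definition smooth_on :: "'a::euclidean_space set \<Rightarrow> ('a \<Rightarrow> real) \<Rightarrow> bool" where
  "smooth_on S f \<longleftrightarrow> (\<forall>vs. set vs \<subseteq> Basis \<longrightarrow> pds S vs f differentiable_on S)"

text \<open>\<open>a k x e\<close> is the coefficient \<open>a_\<gamma>(x,\<epsilon>)\<close> for \<open>\<gamma> = \<epsilon> k\<close>;
  \<open>(T u)(x) = \<Sum>_\<gamma> a_\<gamma>(x,\<epsilon>) u(x+\<gamma>)\<close>.\<close>
definition Top :: "(int^'n \<Rightarrow> real^'n \<Rightarrow> real \<Rightarrow> real) \<Rightarrow> real \<Rightarrow> (int^'n \<Rightarrow> real) \<Rightarrow> int^'n \<Rightarrow> real" where
  "Top a e u k = (\<Sum>\<^sub>\<infinity>l. a l (e *\<^sub>R rvec k) e * u (k + l))"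

definition Hop :: "(int^'n \<Rightarrow> real^'n \<Rightarrow> real \<Rightarrow> real) \<Rightarrow> (real \<Rightarrow> real^'n \<Rightarrow> real) \<Rightarrow> real
     \<Rightarrow> (int^'n \<Rightarrow> real) \<Rightarrow> int^'n \<Rightarrow> real" where
  "Hop a V e u k = Top a e u k + V e (e *\<^sub>R rvec k) * u k"

definition linner :: "(int^'n \<Rightarrow> real) \<Rightarrow> (int^'n \<Rightarrow> real) \<Rightarrow> real" where
  "linner u v = (\<Sum>\<^sub>\<infinity>k. u k * v k)"

definition c0 :: "(int^'n) set \<Rightarrow> (int^'n \<Rightarrow> real) set" where
  "c0 D = {\<phi>. finite {k. \<phi> k \<noteq> 0} \<and> {k. \<phi> k \<noteq> 0} \<subseteq> D}"

definition rayleigh where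
  "rayleigh a V e \<phi> = linner (Hop a V e \<phi>) \<phi> / linner \<phi> \<phi>"

definition lball :: "real \<Rightarrow> int^'n \<Rightarrow> real \<Rightarrow> (int^'n) set" where
  "lball e k R = {l. dist (e *\<^sub>R rvec k) (e *\<^sub>R rvec l) < R}"

definition LambdaR where
  "LambdaR a V e R k = (INF \<phi>\<in>{\<phi>\<in>c0 (lball e k R). \<phi> \<noteq> (\<lambda>_. 0)}. ereal (rayleigh a V e \<phi>))"

definition Sigma_ess where
  "Sigma_ess a V e = (SUP K\<in>{K. finite K}.
      INF \<phi>\<in>{\<phi>\<in>c0 (UNIV - K). \<phi> \<noteq> (\<lambda>_. 0)}. ereal (rayleigh a V e \<phi>))"

definition at_infty_lat :: "real \<Rightarrow> (int^'n) filter" where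
  "at_infty_lat e = filtercomap (\<lambda>k. norm (e *\<^sub>R rvec k)) at_top"

definition t0 :: "(int^'n \<Rightarrow> real^'n \<Rightarrow> real) \<Rightarrow> real^'n \<Rightarrow> real^'n \<Rightarrow> complex" where
  "t0 a0 x \<xi> = (\<Sum>\<^sub>\<infinity>k. complex_of_real (a0 k x) * cis (- (rvec k \<bullet> \<xi>)))"

end

theory Submission
  imports Defs
begin



lemma infsum_supp:
  assumes "finite S" "\<And>x. x \<notin> S \<Longrightarrow> f x = 0"
  shows "infsum f UNIV = sum f S"
proof -
  have "infsum f UNIV = infsum f S"
    by (rule infsum_cong_neutral) (use assms in auto)
  then show ?thesis using assms by simp
qed

definition Qf :: "(int^'n \<Rightarrow> int^'n \<Rightarrow> real) \<Rightarrow> (int^'n \<Rightarrow> real) \<Rightarrow> (int^'n) set \<Rightarrow> (int^'n \<Rightarrow> real) \<Rightarrow> real" where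
  "Qf A W P \<phi> = (\<Sum>k\<in>P. \<Sum>m\<in>P. A (m-k) k * \<phi> m * \<phi> k) + (\<Sum>k\<in>P. W k * (\<phi> k)\<^sup>2)"

lemma Top_fin:
  assumes "finite P" "\<And>k. k \<notin> P \<Longrightarrow> \<phi> k = 0"
  shows "Top a e \<phi> k = (\<Sum>m\<in>P. a (m-k) (e *\<^sub>R rvec k) e * \<phi> m)"
proof -
  have "Top a e \<phi> k = sum (\<lambda>l. a l (e *\<^sub>R rvec k) e * \<phi> (k+l)) ((\<lambda>m. m - k) ` P)"
    unfolding Top_def
  proof (rule infsum_supp)
    show "finite ((\<lambda>m. m - k) ` P)" using assms by simp
    fix l assume "l \<notin> (\<lambda>m. m - k) ` P"
    then have "k + l \<notin> P" by (metis add_diff_cancel_left' image_eqI)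
    then show "a l (e *\<^sub>R rvec k) e * \<phi> (k + l) = 0" using assms by simp
  qed
  also have "\<dots> = (\<Sum>m\<in>P. a (m-k) (e *\<^sub>R rvec k) e * \<phi> m)"
    by (subst sum.reindex) (auto simp: inj_on_def)
  finally show ?thesis .
qed

lemma linner_Hop:
  assumes "finite P" "\<And>k. k \<notin> P \<Longrightarrow> \<phi> k = 0"
  shows "linner (Hop a V e \<phi>) \<phi> = Qf (\<lambda>l k. a l (e *\<^sub>R rvec k) e) (\<lambda>k. V e (e *\<^sub>R rvec k)) P \<phi>"
proof -
  have "linner (Hop a V e \<phi>) \<phi> = (\<Sum>k\<in>P. Hop a V e \<phi> k * \<phi> k)"
    unfolding linner_def by (rule infsum_supp) (use assms in auto)
  also have "\<dots> = Qf (\<lambda>l k. a l (e *\<^sub>R rvec k) e) (\<lambda>k. V e (e *\<^sub>R rvec k)) P \<phi>"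
    unfolding Hop_def Qf_def
    by (simp add: Top_fin[OF assms] sum.distrib algebra_simps sum_distrib_right sum_distrib_left power2_eq_square)
  finally show ?thesis .
qed

lemma linner_self:
  assumes "finite P" "\<And>k. k \<notin> P \<Longrightarrow> \<phi> k = 0"
  shows "linner \<phi> \<phi> = (\<Sum>k\<in>P. (\<phi> k)\<^sup>2)"
  unfolding linner_def power2_eq_square by (rule infsum_supp) (use assms in auto)




lemma abs_le_int_iff: "\<bar>x::int\<bar> \<le> N \<longleftrightarrow> x \<in> {-N..N}" by auto

definition boxn :: "nat \<Rightarrow> (int^'n) set" where
  "boxn N = {l. \<forall>i. \<bar>l$i\<bar> \<le> int N}"

lemma boxn_eq: "boxn N = vec_lambda ` (PiE UNIV (\<lambda>_. {-int N..int N}))"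
proof (rule set_eqI)
  fix l :: "int^'n"
  show "l \<in> boxn N \<longleftrightarrow> l \<in> vec_lambda ` (PiE UNIV (\<lambda>_. {-int N..int N}))"
  proof
    assume "l \<in> boxn N"
    then have "vec_nth l \<in> PiE UNIV (\<lambda>_. {-int N..int N})"
      by (auto simp: boxn_def PiE_def Pi_def abs_le_int_iff)
    moreover have "l = vec_lambda (vec_nth l)" by simp
    ultimately show "l \<in> vec_lambda ` (PiE UNIV (\<lambda>_. {-int N..int N}))" by blast
  next
    assume "l \<in> vec_lambda ` (PiE UNIV (\<lambda>_. {-int N..int N}))"
    then obtain g where "g \<in> PiE UNIV (\<lambda>_. {-int N..int N})" "l = vec_lambda g" by blast
    then show "l \<in> boxn N" by (auto simp: boxn_def PiE_def Pi_def abs_le_int_iff)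
  qed
qed

lemma finite_boxn: "finite (boxn N)"
  unfolding boxn_eq by (intro finite_imageI finite_PiE) auto

lemma boxn_prod_sum:
  fixes w :: "int \<Rightarrow> real"
  shows "(\<Sum>l\<in>(boxn N :: (int^'n::finite) set). \<Prod>i\<in>UNIV. w (l$i)) = (\<Prod>i\<in>(UNIV::'n set). \<Sum>t\<in>{-int N..int N}. w t)"
  unfolding boxn_eq
  apply (subst sum.reindex)
   apply (auto simp: inj_on_def vec_lambda_inject)[1]
  apply (simp only: o_def vec_lambda_beta)
  apply (rule prod_sum_PiE[symmetric])
   apply auto
  done

lemma fr: "(x::real) \<ge> 0 \<Longrightarrow> 2 / (x + 1)\<^sup>2 \<le> 4 / (x + 1) - 4 / (x + 2)"
proof -
  assume x: "x \<ge> 0"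
  have n1: "x + 1 \<noteq> 0" "x + 2 \<noteq> 0" using x by auto
  have d: "0 < (x+1)\<^sup>2 * (x+2)" using x by simp
  have "2 / (x + 1)\<^sup>2 = (2*(x+2)) / ((x+1)\<^sup>2 * (x+2))" using x by (subst mult_divide_mult_cancel_right) auto
  also have "\<dots> \<le> (4*(x+1)) / ((x+1)\<^sup>2 * (x+2))"
    by (rule divide_right_mono) (use x d in auto)
  also have "(x+1)\<^sup>2 * (x+2) = ((x+1)*(x+2)) * (x+1)" by (simp add: power2_eq_square)
  also have "(4*(x+1)) / (((x+1)*(x+2)) * (x+1)) = 4 / ((x+1)*(x+2))"
    using n1 by (subst mult_divide_mult_cancel_right) auto
  also have "\<dots> = 4 / (x + 1) - 4 / (x + 2)" using n1 by (simp add: field_simps)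
  finally show ?thesis .
qed

definition wt :: "int \<Rightarrow> real" where "wt t = 1 / max 1 ((real_of_int t)\<^sup>2)"

lemma wt_nonneg: "0 \<le> wt t" by (simp add: wt_def)

lemma wt_sum: "(\<Sum>t\<in>{-int N..int N}. wt t) \<le> 5 - 4 / (real N + 1)"
proof (induction N)
  case 0
  then show ?case by (simp add: wt_def)
next
  case (Suc N)
  have eq: "{-int (Suc N)..int (Suc N)} = insert (-int (Suc N)) (insert (int (Suc N)) {-int N..int N})"
    by auto
  have "(\<Sum>t\<in>{-int (Suc N)..int (Suc N)}. wt t) = wt (-int (Suc N)) + wt (int (Suc N)) + (\<Sum>t\<in>{-int N..int N}. wt t)"
    unfolding eq by (subst sum.insert; simp)+
  also have "wt (-int (Suc N)) = 1 / (real N + 1)\<^sup>2" unfolding wt_def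
    by (simp add: max_def power2_eq_square algebra_simps)
  also have "wt (int (Suc N)) = 1 / (real N + 1)\<^sup>2" unfolding wt_def
    by (simp add: max_def power2_eq_square algebra_simps)
  finally have "(\<Sum>t\<in>{-int (Suc N)..int (Suc N)}. wt t) \<le> 2 / (real N + 1)\<^sup>2 + (5 - 4 / (real N + 1))"
    using Suc by simp
  also have "\<dots> \<le> 5 - 4 / (real (Suc N) + 1)"
  proof -
    have "2 / (real N + 1)\<^sup>2 \<le> 4 / (real N + 1) - 4 / (real N + 2)"
      by (rule fr) simp
    moreover have "4 / (real (Suc N) + 1) = 4 / (real N + 2)" by (simp add: algebra_simps)
    ultimately show ?thesis by linarith
  qed
  finally show ?case .
qed

lemma wt_sum5: "(\<Sum>t\<in>{-int N..int N}. wt t) \<le> 5"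
  using wt_sum[of N] by (smt (verit) divide_nonneg_nonneg of_nat_0_le_iff)

lemma norm_rvec_sq: "(norm (rvec l))\<^sup>2 = (\<Sum>i\<in>UNIV. (real_of_int (l$i))\<^sup>2)"
  unfolding power2_norm_eq_inner by (simp add: inner_vec_def rvec_def power2_eq_square)

lemma norm_rvec_ge: "l \<noteq> 0 \<Longrightarrow> max 1 ((real_of_int (l$i))\<^sup>2) \<le> (norm (rvec l))\<^sup>2"
proof -
  assume "l \<noteq> 0"
  then obtain j where j: "l$j \<noteq> 0" by (metis vec_eq_iff zero_index)
  have c: "\<bar>rvec l $ m\<bar> \<le> norm (rvec l)" for m by (rule component_le_norm_cart)
  have "1 \<le> \<bar>real_of_int (l$j)\<bar>" using j by linarith
  also have "\<dots> \<le> norm (rvec l)" using c[of j] by (simp add: rvec_def)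
  finally have 1: "1 \<le> (norm (rvec l))\<^sup>2" by (smt (verit) one_le_power)
  have "\<bar>real_of_int (l$i)\<bar> \<le> norm (rvec l)" using c[of i] by (simp add: rvec_def)
  then have "(real_of_int (l$i))\<^sup>2 \<le> (norm (rvec l))\<^sup>2"
    by (metis abs_ge_zero abs_le_square_iff abs_of_nonneg norm_ge_zero power2_abs)
  with 1 show ?thesis by simp
qed

lemma prod_wt_bound:
  assumes "l \<noteq> 0"
  shows "1 / (norm (rvec (l::int^'n)))^(2*CARD('n)) \<le> (\<Prod>i\<in>UNIV. wt (l$i))"
proof -
  have "(\<Prod>i\<in>(UNIV::'n set). max 1 ((real_of_int (l$i))\<^sup>2)) \<le> (\<Prod>i\<in>(UNIV::'n set). (norm (rvec l))\<^sup>2)"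
    by (rule prod_mono) (use norm_rvec_ge[OF assms] in auto)
  also have "\<dots> = (norm (rvec l))^(2*CARD('n))" by (simp add: power_mult)
  finally have le: "(\<Prod>i\<in>(UNIV::'n set). max 1 ((real_of_int (l$i))\<^sup>2)) \<le> (norm (rvec l))^(2*CARD('n))" .
  have pos: "0 < (\<Prod>i\<in>(UNIV::'n set). max 1 ((real_of_int (l$i))\<^sup>2))"
    by (rule prod_pos) auto
  have "1 / (norm (rvec (l::int^'n)))^(2*CARD('n)) \<le> 1 / (\<Prod>i\<in>(UNIV::'n set). max 1 ((real_of_int (l$i))\<^sup>2))"
    by (rule divide_left_mono[OF _ _ ]) (use le pos in auto)
  also have "\<dots> = (\<Prod>i\<in>UNIV. wt (l$i))"
    unfolding wt_def by (simp add: prod_dividef)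
  finally show ?thesis .
qed

lemma sum_bound:
  fixes A :: "int^'n \<Rightarrow> int^'n \<Rightarrow> real"
  assumes Bn: "\<And>l k. norm (rvec l)^(2*CARD('n)+1) * \<bar>A l k\<bar> \<le> Bn"
    and F: "finite F"
  shows "(\<Sum>l\<in>F. \<bar>A l (x l)\<bar> * norm (rvec l)) \<le> Bn * 5^CARD('n)"
proof -
  have r0: "rvec (0::int^'n) = 0" by (simp add: rvec_def vec_eq_iff)
  have B0: "0 \<le> Bn" using Bn[of 0 0] by (simp add: r0)
  have trm: "\<bar>A l (x l)\<bar> * norm (rvec l) \<le> Bn * (\<Prod>i\<in>UNIV. wt (l$i))" for l
  proof (cases "l = 0")
    case True
    then show ?thesis using B0 by (simp add: r0 wt_nonneg prod_nonneg)
  next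
    case False
    define n where "n = norm (rvec l)"
    have "1 \<le> n\<^sup>2" using norm_rvec_ge[OF False, of undefined] unfolding n_def by simp
    have n0: "0 \<le> n" by (simp add: n_def)
    have n1: "1 \<le> n"
    proof (rule ccontr)
      assume "\<not> 1 \<le> n"
      then have "n * n \<le> n * 1" using n0 by (intro mult_left_mono) auto
      then have "n\<^sup>2 < 1" using \<open>\<not> 1 \<le> n\<close> by (simp add: power2_eq_square)
      then show False using \<open>1 \<le> n\<^sup>2\<close> by simp
    qed
    have p: "0 < n^(2*CARD('n))" using n1 by simp
    have "(n^(2*CARD('n)+1) * \<bar>A l (x l)\<bar>) * (1 / n^(2*CARD('n))) = (\<bar>A l (x l)\<bar> * n) * (n^(2*CARD('n)) / n^(2*CARD('n)))"
      by (simp only: power_add power_one_right) (simp add: mult_ac)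
    then have "\<bar>A l (x l)\<bar> * n = (n^(2*CARD('n)+1) * \<bar>A l (x l)\<bar>) * (1 / n^(2*CARD('n)))"
      using p by simp
    also have "\<dots> \<le> Bn * (1 / n^(2*CARD('n)))"
      by (rule mult_right_mono) (use Bn[of l "x l"] n_def n1 in auto)
    also have "\<dots> \<le> Bn * (\<Prod>i\<in>UNIV. wt (l$i))"
      by (rule mult_left_mono) (use prod_wt_bound[OF False] n_def B0 in auto)
    finally show ?thesis unfolding n_def .
  qed
  define N where "N = nat (\<Sum>l\<in>F. \<Sum>i\<in>UNIV. \<bar>l$i\<bar>)"
  have sub: "F \<subseteq> boxn N"
  proof
    fix l assume l: "l \<in> F"
    have "\<bar>l$i\<bar> \<le> int N" for i
    proof -
      have "\<bar>l$i\<bar> \<le> (\<Sum>i\<in>UNIV. \<bar>l$i\<bar>)" by (rule member_le_sum) auto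
      also have "\<dots> \<le> (\<Sum>l\<in>F. \<Sum>i\<in>UNIV. \<bar>l$i\<bar>)"
        by (rule member_le_sum[where f="\<lambda>l. \<Sum>i\<in>UNIV. \<bar>l$i\<bar>"]) (use l F in \<open>auto intro: sum_nonneg\<close>)
      finally have "\<bar>l$i\<bar> \<le> (\<Sum>l\<in>F. \<Sum>i\<in>UNIV. \<bar>l$i\<bar>)" .
      then show ?thesis unfolding N_def by linarith
    qed
    then show "l \<in> boxn N" by (simp add: boxn_def)
  qed
  have "(\<Sum>l\<in>F. \<bar>A l (x l)\<bar> * norm (rvec l)) \<le> (\<Sum>l\<in>F. Bn * (\<Prod>i\<in>UNIV. wt (l$i)))"
    by (rule sum_mono) (rule trm)
  also have "\<dots> \<le> (\<Sum>l\<in>(boxn N :: (int^'n) set). Bn * (\<Prod>i\<in>UNIV. wt (l$i)))"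
    using sub B0 by (intro sum_mono2 finite_boxn) (auto intro!: mult_nonneg_nonneg prod_nonneg wt_nonneg)
  also have "\<dots> = Bn * (\<Prod>i\<in>(UNIV::'n set). \<Sum>t\<in>{-int N..int N}. wt t)"
    by (simp add: sum_distrib_left[symmetric] boxn_prod_sum)
  also have "\<dots> \<le> Bn * (\<Prod>i\<in>(UNIV::'n set). 5)"
    by (rule mult_left_mono[OF prod_mono]) (use B0 wt_sum5 in \<open>auto intro: sum_nonneg wt_nonneg\<close>)
  finally show ?thesis by simp
qed




definition cutf :: "'n \<Rightarrow> int \<Rightarrow> int \<Rightarrow> (int^'n::finite \<Rightarrow> real) \<Rightarrow> int^'n \<Rightarrow> real" where
  "cutf i r t \<phi> k = (if t \<le> k$i \<and> k$i < t + r then \<phi> k else 0)"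

lemma Qf_zero: "(\<And>k. k \<in> P \<Longrightarrow> \<psi> k = 0) \<Longrightarrow> Qf A W P \<psi> = 0"
  by (simp add: Qf_def)

lemma count_lemma:
  fixes r :: int and T :: "int set"
  assumes T: "finite T" "{b - r + 1 .. b} \<subseteq> T"
  shows "(\<Sum>t\<in>T. of_bool (t \<le> a \<and> a < t + r \<and> t \<le> b \<and> b < t + r) :: real) = real (nat (r - \<bar>a - b\<bar>))"
proof -
  have "T \<inter> {t. t \<le> a \<and> a < t + r \<and> t \<le> b \<and> b < t + r} = {max a b - r + 1 .. min a b}"
  proof (rule set_eqI, rule iffI)
    fix x assume "x \<in> {max a b - r + 1 .. min a b}"
    then have "x \<in> {b - r + 1 .. b}" "t \<le> a \<and> a < t + r \<and> t \<le> b \<and> b < t + r" if "t = x" for t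
      using that by auto
    then show "x \<in> T \<inter> {t. t \<le> a \<and> a < t + r \<and> t \<le> b \<and> b < t + r}" using T by blast
  qed auto
  then have "(\<Sum>t\<in>T. of_bool (t \<le> a \<and> a < t + r \<and> t \<le> b \<and> b < t + r) :: real)
      = real (card {max a b - r + 1 .. min a b})"
    using T by simp
  also have "card {max a b - r + 1 .. min a b} = nat (r - \<bar>a - b\<bar>)"
  proof -
    have "min a b - (max a b - r + 1) + 1 = r - \<bar>a - b\<bar>" by (simp add: max_def min_def abs_if)
    then show ?thesis by simp
  qed
  finally show ?thesis .
qed


lemma amgm_abs: "\<bar>x::real\<bar> * \<bar>y\<bar> \<le> (x\<^sup>2 + y\<^sup>2) / 2"
proof -
  have "0 \<le> (\<bar>x\<bar> - \<bar>y\<bar>)\<^sup>2" by simp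
  then show ?thesis by (simp add: power2_eq_square algebra_simps)
qed

lemma loc1:
  fixes A :: "int^'n \<Rightarrow> int^'n \<Rightarrow> real" and W :: "int^'n \<Rightarrow> real" and \<phi> :: "int^'n \<Rightarrow> real"
    and i :: 'n and r :: int
  assumes P: "finite P" and nz: "0 < (\<Sum>k\<in>P. (\<phi> k)\<^sup>2)"
    and Bd: "\<And>F x. finite F \<Longrightarrow> (\<Sum>l\<in>F. \<bar>A l (x l)\<bar> * norm (rvec l)) \<le> B"
    and r: "1 \<le> r"
  shows "\<exists>t. 0 < (\<Sum>k\<in>P. (cutf i r t \<phi> k)\<^sup>2) \<and>
     Qf A W P (cutf i r t \<phi>) \<le> (Qf A W P \<phi> / (\<Sum>k\<in>P. (\<phi> k)\<^sup>2) + B / r) * (\<Sum>k\<in>P. (cutf i r t \<phi> k)\<^sup>2)"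
proof -
  define nphi where "nphi = (\<Sum>k\<in>P. (\<phi> k)\<^sup>2)"
  define chi where "chi t k = (of_bool (t \<le> k$i \<and> k$i < t + r) :: real)" for t k
  have cut: "cutf i r t \<phi> k = chi t k * \<phi> k" for t k by (simp add: cutf_def chi_def)
  define T where "T = (\<Union>k\<in>P. {k$i - r + 1 .. k$i})"
  have T: "finite T" using P by (simp add: T_def)
  define N where "N m k = (\<Sum>t\<in>T. chi t m * chi t k)" for m k
  have N: "N m k = real (nat (r - \<bar>m$i - k$i\<bar>))" if "k \<in> P" for m k
  proof -
    have "N m k = (\<Sum>t\<in>T. of_bool (t \<le> m$i \<and> m$i < t + r \<and> t \<le> k$i \<and> k$i < t + r))"
      unfolding N_def chi_def by (intro sum.cong) auto
    also have "\<dots> = real (nat (r - \<bar>m$i - k$i\<bar>))"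
      by (rule count_lemma) (use T that in \<open>auto simp: T_def\<close>)
    finally show ?thesis .
  qed
  have Nkk: "N k k = r" if "k\<in>P" for k using N[OF that, of k] r by simp
  have Ndiff: "\<bar>N m k - r\<bar> \<le> norm (rvec (m - k))" if "k\<in>P" for m k
  proof -
    have "\<bar>N m k - r\<bar> \<le> \<bar>real_of_int (m$i - k$i)\<bar>"
      using N[OF that, of m] r by (cases "\<bar>m$i - k$i\<bar> \<le> r") auto
    also have "\<dots> \<le> norm (rvec (m - k))"
      using component_le_norm_cart[of "rvec (m-k)" i] by (simp add: rvec_def)
    finally show ?thesis .
  qed
  have S1: "(\<Sum>t\<in>T. \<Sum>k\<in>P. (cutf i r t \<phi> k)\<^sup>2) = r * nphi"
  proof -
    have "(\<Sum>t\<in>T. \<Sum>k\<in>P. (cutf i r t \<phi> k)\<^sup>2) = (\<Sum>k\<in>P. \<Sum>t\<in>T. (chi t k * chi t k) * (\<phi> k)\<^sup>2)"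
      by (subst sum.swap) (simp add: cut power2_eq_square mult_ac)
    also have "\<dots> = (\<Sum>k\<in>P. N k k * (\<phi> k)\<^sup>2)" by (simp add: N_def sum_distrib_right)
    also have "\<dots> = (\<Sum>k\<in>P. r * (\<phi> k)\<^sup>2)" by (rule sum.cong) (auto simp: Nkk)
    finally show ?thesis by (simp add: nphi_def sum_distrib_left)
  qed
  define X where "X = (\<Sum>k\<in>P. \<Sum>m\<in>P. A (m-k) k * \<phi> m * \<phi> k * N m k)"
  define X0 where "X0 = (\<Sum>k\<in>P. \<Sum>m\<in>P. A (m-k) k * \<phi> m * \<phi> k)"
  define Y where "Y = (\<Sum>k\<in>P. W k * (\<phi> k)\<^sup>2)"
  have QfP: "Qf A W P \<phi> = X0 + Y" by (simp add: Qf_def X0_def Y_def)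
  have S2: "(\<Sum>t\<in>T. Qf A W P (cutf i r t \<phi>)) = X + r * Y"
  proof -
    have 1: "(\<Sum>t\<in>T. \<Sum>k\<in>P. \<Sum>m\<in>P. A (m-k) k * cutf i r t \<phi> m * cutf i r t \<phi> k) = X"
    proof -
      have "(\<Sum>t\<in>T. \<Sum>k\<in>P. \<Sum>m\<in>P. A (m-k) k * cutf i r t \<phi> m * cutf i r t \<phi> k)
          = (\<Sum>k\<in>P. \<Sum>t\<in>T. \<Sum>m\<in>P. A (m-k) k * cutf i r t \<phi> m * cutf i r t \<phi> k)"
        by (rule sum.swap)
      also have "\<dots> = (\<Sum>k\<in>P. \<Sum>m\<in>P. \<Sum>t\<in>T. A (m-k) k * cutf i r t \<phi> m * cutf i r t \<phi> k)"
        by (rule sum.cong[OF refl]) (rule sum.swap)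
      also have "\<dots> = X"
        unfolding X_def N_def
        by (rule sum.cong[OF refl], rule sum.cong[OF refl]) (simp add: cut sum_distrib_left mult_ac)
      finally show ?thesis .
    qed
    have 2: "(\<Sum>t\<in>T. \<Sum>k\<in>P. W k * (cutf i r t \<phi> k)\<^sup>2) = r * Y"
    proof -
      have "(\<Sum>t\<in>T. \<Sum>k\<in>P. W k * (cutf i r t \<phi> k)\<^sup>2) = (\<Sum>k\<in>P. \<Sum>t\<in>T. W k * (cutf i r t \<phi> k)\<^sup>2)"
        by (rule sum.swap)
      also have "\<dots> = (\<Sum>k\<in>P. W k * (\<phi> k)\<^sup>2 * N k k)"
        unfolding N_def
        by (rule sum.cong[OF refl]) (simp add: cut sum_distrib_left power2_eq_square mult_ac)
      also have "\<dots> = (\<Sum>k\<in>P. r * (W k * (\<phi> k)\<^sup>2))" by (rule sum.cong) (auto simp: Nkk)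
      finally show ?thesis by (simp add: Y_def sum_distrib_left)
    qed
    show ?thesis unfolding Qf_def sum.distrib 1 2 ..
  qed
  define c where "c m k = \<bar>A (m-k) k\<bar> * norm (rvec (m-k))" for m k
  have c0: "0 \<le> c m k" for m k by (simp add: c_def)
  have cB1: "(\<Sum>m\<in>P. c m k) \<le> B" for k
  proof -
    have "(\<Sum>m\<in>P. c m k) = (\<Sum>l\<in>(\<lambda>m. m-k)`P. \<bar>A l ((\<lambda>_. k) l)\<bar> * norm (rvec l))"
      unfolding c_def by (subst sum.reindex) (auto simp: inj_on_def)
    also have "\<dots> \<le> B" by (rule Bd) (use P in simp)
    finally show ?thesis .
  qed
  have cB2: "(\<Sum>k\<in>P. c m k) \<le> B" for m
  proof -
    have "(\<Sum>k\<in>P. c m k) = (\<Sum>l\<in>(\<lambda>k. m-k)`P. \<bar>A l ((\<lambda>l. m - l) l)\<bar> * norm (rvec l))"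
      unfolding c_def by (subst sum.reindex) (auto simp: inj_on_def)
    also have "\<dots> \<le> B" by (rule Bd) (use P in simp)
    finally show ?thesis .
  qed
  have D: "X - r * X0 \<le> B * nphi"
  proof -
    have "X - r * X0 = (\<Sum>k\<in>P. \<Sum>m\<in>P. A (m-k) k * \<phi> m * \<phi> k * (N m k - r))"
      unfolding X_def X0_def by (simp add: sum_distrib_left sum_subtractf[symmetric] algebra_simps)
    also have "\<dots> \<le> (\<Sum>k\<in>P. \<Sum>m\<in>P. c m k * ((\<phi> m)\<^sup>2 / 2) + (\<phi> k)\<^sup>2 / 2 * c m k)"
    proof (rule sum_mono, rule sum_mono)
      fix k m assume k: "k \<in> P" and m: "m \<in> P"
      have "A (m-k) k * \<phi> m * \<phi> k * (N m k - r) \<le> \<bar>A (m-k) k\<bar> * (\<bar>\<phi> m\<bar> * \<bar>\<phi> k\<bar>) * \<bar>N m k - r\<bar>"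
        by (simp add: abs_mult[symmetric] mult.assoc)
      also have "\<dots> \<le> \<bar>A (m-k) k\<bar> * ((\<phi> m)\<^sup>2 / 2 + (\<phi> k)\<^sup>2 / 2) * norm (rvec (m - k))"
        by (intro mult_mono mult_left_mono) (use amgm_abs[of "\<phi> m" "\<phi> k"] Ndiff[OF k, of m] in auto)
      also have "\<dots> = c m k * ((\<phi> m)\<^sup>2 / 2) + (\<phi> k)\<^sup>2 / 2 * c m k"
        by (simp add: c_def algebra_simps)
      finally show "A (m-k) k * \<phi> m * \<phi> k * (N m k - r) \<le> c m k * ((\<phi> m)\<^sup>2 / 2) + (\<phi> k)\<^sup>2 / 2 * c m k" .
    qed
    also have "\<dots> = (\<Sum>m\<in>P. (\<phi> m)\<^sup>2 / 2 * (\<Sum>k\<in>P. c m k)) + (\<Sum>k\<in>P. (\<phi> k)\<^sup>2 / 2 * (\<Sum>m\<in>P. c m k))"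
    proof -
      have e1: "(\<Sum>k\<in>P. \<Sum>m\<in>P. c m k * ((\<phi> m)\<^sup>2/2)) = (\<Sum>m\<in>P. (\<phi> m)\<^sup>2/2 * (\<Sum>k\<in>P. c m k))"
        by (subst sum.swap) (simp add: sum_distrib_left sum_distrib_right sum_divide_distrib mult_ac)
      have e2: "(\<Sum>k\<in>P. \<Sum>m\<in>P. (\<phi> k)\<^sup>2/2 * c m k) = (\<Sum>k\<in>P. (\<phi> k)\<^sup>2/2 * (\<Sum>m\<in>P. c m k))"
        by (simp add: sum_distrib_left)
      show ?thesis by (simp only: sum.distrib e1 e2)
    qed
    also have "\<dots> \<le> (\<Sum>m\<in>P. (\<phi> m)\<^sup>2 / 2 * B) + (\<Sum>k\<in>P. (\<phi> k)\<^sup>2 / 2 * B)"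
      by (intro add_mono sum_mono mult_left_mono cB1 cB2) auto
    also have "\<dots> = B * nphi" by (simp add: nphi_def sum_distrib_left sum_divide_distrib[symmetric] algebra_simps)
    finally show ?thesis .
  qed
  define \<rho> where "\<rho> = Qf A W P \<phi> / nphi + B / r"
  have np: "0 < nphi" using nz by (simp add: nphi_def)
  have rp: "0 < real_of_int r" using r by simp
  have tot: "(\<Sum>t\<in>T. Qf A W P (cutf i r t \<phi>) - \<rho> * (\<Sum>k\<in>P. (cutf i r t \<phi> k)\<^sup>2)) \<le> 0"
  proof -
    have "(\<Sum>t\<in>T. Qf A W P (cutf i r t \<phi>) - \<rho> * (\<Sum>k\<in>P. (cutf i r t \<phi> k)\<^sup>2))
        = X + r * Y - \<rho> * (r * nphi)"
      by (simp add: sum_subtractf S2 sum_distrib_left[symmetric] S1)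
    also have "\<rho> * (r * nphi) = r * (X0 + Y) + B * nphi"
      unfolding \<rho>_def QfP[symmetric] using np rp by (simp add: field_simps)
    finally show ?thesis using D by (simp add: algebra_simps)
  qed
  show ?thesis
  proof (rule ccontr)
    assume neg: "\<not> ?thesis"
    have each: "0 \<le> Qf A W P (cutf i r t \<phi>) - \<rho> * (\<Sum>k\<in>P. (cutf i r t \<phi> k)\<^sup>2)" for t
    proof (cases "0 < (\<Sum>k\<in>P. (cutf i r t \<phi> k)\<^sup>2)")
      case True
      then show ?thesis using neg \<rho>_def nphi_def by fastforce
    next
      case False
      moreover have "0 \<le> (\<Sum>k\<in>P. (cutf i r t \<phi> k)\<^sup>2)" by (intro sum_nonneg) auto
      ultimately have "(\<Sum>k\<in>P. (cutf i r t \<phi> k)\<^sup>2) = 0" by linarith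
      then have z: "\<And>k. k \<in> P \<Longrightarrow> cutf i r t \<phi> k = 0" using sum_nonneg_eq_0_iff[OF P, of "\<lambda>k. (cutf i r t \<phi> k)\<^sup>2"] by auto
      then show ?thesis using Qf_zero[of P "cutf i r t \<phi>", OF z] \<open>_ = 0\<close> by simp
    qed
    have "\<exists>t\<in>T. 0 < (\<Sum>k\<in>P. (cutf i r t \<phi> k)\<^sup>2)"
    proof (rule ccontr)
      assume nn: "\<not> ?thesis"
      have "(\<Sum>t\<in>T. \<Sum>k\<in>P. (cutf i r t \<phi> k)\<^sup>2) \<le> 0" by (rule sum_nonpos) (use nn in \<open>simp add: not_less\<close>)
      moreover have "0 < real_of_int r * nphi" using np rp by simp
      ultimately show False using S1 by linarith
    qed
    then obtain t0 where t0: "t0 \<in> T" "0 < (\<Sum>k\<in>P. (cutf i r t0 \<phi> k)\<^sup>2)" by blast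
    have "0 < Qf A W P (cutf i r t0 \<phi>) - \<rho> * (\<Sum>k\<in>P. (cutf i r t0 \<phi> k)\<^sup>2)"
      using neg t0 \<rho>_def nphi_def by fastforce
    then have "0 < (\<Sum>t\<in>T. Qf A W P (cutf i r t \<phi>) - \<rho> * (\<Sum>k\<in>P. (cutf i r t \<phi> k)\<^sup>2))"
      by (intro sum_pos2[OF T t0(1)]) (use each in auto)
    with tot show False by simp
  qed
qed




lemma locd:
  fixes A :: "int^'n \<Rightarrow> int^'n \<Rightarrow> real" and W :: "int^'n \<Rightarrow> real" and \<phi> :: "int^'n \<Rightarrow> real"
    and r :: int and J :: "'n set"
  assumes P: "finite P" and nz: "0 < (\<Sum>k\<in>P. (\<phi> k)\<^sup>2)"
    and Bd: "\<And>F x. finite F \<Longrightarrow> (\<Sum>l\<in>F. \<bar>A l (x l)\<bar> * norm (rvec l)) \<le> B"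
    and r: "1 \<le> r" and J: "finite J"
  shows "\<exists>\<psi> t. (\<forall>k. \<psi> k \<noteq> 0 \<longrightarrow> \<phi> k \<noteq> 0 \<and> (\<forall>j\<in>J. t j \<le> k$j \<and> k$j < t j + r)) \<and>
     0 < (\<Sum>k\<in>P. (\<psi> k)\<^sup>2) \<and>
     Qf A W P \<psi> \<le> (Qf A W P \<phi> / (\<Sum>k\<in>P. (\<phi> k)\<^sup>2) + real (card J) * B / r) * (\<Sum>k\<in>P. (\<psi> k)\<^sup>2)"
  using J
proof (induction J rule: finite_induct)
  case empty
  show ?case
    by (rule exI[of _ \<phi>], rule exI[of _ "\<lambda>_. 0"]) (use nz in simp)
next
  case (insert j J)
  obtain \<psi> t where H:
    "(\<forall>k. \<psi> k \<noteq> 0 \<longrightarrow> \<phi> k \<noteq> 0 \<and> (\<forall>j\<in>J. t j \<le> k$j \<and> k$j < t j + r)) \<and>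
    0 < (\<Sum>k\<in>P. (\<psi> k)\<^sup>2) \<and>
    Qf A W P \<psi> \<le> (Qf A W P \<phi> / (\<Sum>k\<in>P. (\<phi> k)\<^sup>2) + real (card J) * B / r) * (\<Sum>k\<in>P. (\<psi> k)\<^sup>2)"
    using insert.IH by (elim exE) (erule that)
  have sp: "\<forall>k. \<psi> k \<noteq> 0 \<longrightarrow> \<phi> k \<noteq> 0 \<and> (\<forall>j\<in>J. t j \<le> k$j \<and> k$j < t j + r)"
    using H by (rule conjunct1)
  have pos: "0 < (\<Sum>k\<in>P. (\<psi> k)\<^sup>2)" using H by (rule conjunct1[OF conjunct2])
  have q: "Qf A W P \<psi> \<le> (Qf A W P \<phi> / (\<Sum>k\<in>P. (\<phi> k)\<^sup>2) + real (card J) * B / r) * (\<Sum>k\<in>P. (\<psi> k)\<^sup>2)"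
    using H by (rule conjunct2[OF conjunct2])
  obtain t' where H2: "0 < (\<Sum>k\<in>P. (cutf j r t' \<psi> k)\<^sup>2) \<and>
    Qf A W P (cutf j r t' \<psi>) \<le> (Qf A W P \<psi> / (\<Sum>k\<in>P. (\<psi> k)\<^sup>2) + B / r) * (\<Sum>k\<in>P. (cutf j r t' \<psi> k)\<^sup>2)"
  proof -
    have "\<exists>t'. 0 < (\<Sum>k\<in>P. (cutf j r t' \<psi> k)\<^sup>2) \<and>
      Qf A W P (cutf j r t' \<psi>) \<le> (Qf A W P \<psi> / (\<Sum>k\<in>P. (\<psi> k)\<^sup>2) + B / r) * (\<Sum>k\<in>P. (cutf j r t' \<psi> k)\<^sup>2)"
      apply (rule loc1[where A=A and W=W and i=j and B=B])
         apply (rule P)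
        apply (rule pos)
       apply (erule Bd)
      apply (rule r)
      done
    then show ?thesis by (elim exE) (erule that)
  qed
  have pos': "0 < (\<Sum>k\<in>P. (cutf j r t' \<psi> k)\<^sup>2)" using H2 by (rule conjunct1)
  have q': "Qf A W P (cutf j r t' \<psi>) \<le> (Qf A W P \<psi> / (\<Sum>k\<in>P. (\<psi> k)\<^sup>2) + B / r) * (\<Sum>k\<in>P. (cutf j r t' \<psi> k)\<^sup>2)"
    using H2 by (rule conjunct2)
  have q2: "Qf A W P \<psi> / (\<Sum>k\<in>P. (\<psi> k)\<^sup>2) \<le> Qf A W P \<phi> / (\<Sum>k\<in>P. (\<phi> k)\<^sup>2) + real (card J) * B / r"
    using q pos by (simp add: pos_divide_le_eq)
  have nn: "0 \<le> (\<Sum>k\<in>P. (cutf j r t' \<psi> k)\<^sup>2)" by (intro sum_nonneg) auto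
  show ?case
  proof (intro exI conjI)
    show "\<forall>k. cutf j r t' \<psi> k \<noteq> 0 \<longrightarrow> \<phi> k \<noteq> 0 \<and>
        (\<forall>j'\<in>insert j J. (t(j := t')) j' \<le> k$j' \<and> k$j' < (t(j := t')) j' + r)"
      using sp insert.hyps(2) by (auto simp: cutf_def split: if_splits)
    show "0 < (\<Sum>k\<in>P. (cutf j r t' \<psi> k)\<^sup>2)" by (rule pos')
    have step: "Qf A W P (cutf j r t' \<psi>) \<le> (Qf A W P \<phi> / (\<Sum>k\<in>P. (\<phi> k)\<^sup>2) + real (card J) * B / r + B / r) * (\<Sum>k\<in>P. (cutf j r t' \<psi> k)\<^sup>2)"
      by (rule order.trans[OF q']) (intro mult_right_mono add_right_mono q2 nn)
    have eq: "Qf A W P \<phi> / (\<Sum>k\<in>P. (\<phi> k)\<^sup>2) + real (card J) * B / r + B / r = Qf A W P \<phi> / (\<Sum>k\<in>P. (\<phi> k)\<^sup>2) + real (card (insert j J)) * B / r"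
      using insert.hyps by (simp add: add_divide_distrib[symmetric] algebra_simps)
    from step show "Qf A W P (cutf j r t' \<psi>) \<le> (Qf A W P \<phi> / (\<Sum>k\<in>P. (\<phi> k)\<^sup>2) + real (card (insert j J)) * B / r) * (\<Sum>k\<in>P. (cutf j r t' \<psi> k)\<^sup>2)"
      by (simp only: eq)
  qed
qed




lemma finite_normball:
  assumes e: "0 < e"
  shows "finite {k::int^'n. norm (e *\<^sub>R rvec k) < X}"
proof (rule finite_subset[OF _ finite_boxn[of "nat \<lceil>X/e\<rceil>"]])
  show "{k::int^'n. norm (e *\<^sub>R rvec k) < X} \<subseteq> boxn (nat \<lceil>X/e\<rceil>)"
  proof
    fix k :: "int^'n" assume "k \<in> {k. norm (e *\<^sub>R rvec k) < X}"
    then have k: "e * norm (rvec k) < X" using e by simp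
    have "\<bar>k$i\<bar> \<le> int (nat \<lceil>X/e\<rceil>)" for i
    proof -
      have "\<bar>real_of_int (k$i)\<bar> \<le> norm (rvec k)"
        using component_le_norm_cart[of "rvec k" i] by (simp add: rvec_def)
      also have "\<dots> < X / e" using k e by (simp add: field_simps)
      also have "\<dots> \<le> real_of_int \<lceil>X/e\<rceil>" by (rule le_of_int_ceiling)
      finally have "\<bar>k$i\<bar> < \<lceil>X/e\<rceil>" by linarith
      then show ?thesis by linarith
    qed
    then show "k \<in> boxn (nat \<lceil>X/e\<rceil>)" by (simp add: boxn_def)
  qed
qed

lemma rayleigh_Qf:
  assumes "finite P" "\<And>k. k \<notin> P \<Longrightarrow> \<phi> k = 0"
  shows "rayleigh a V e \<phi> = Qf (\<lambda>l k. a l (e *\<^sub>R rvec k) e) (\<lambda>k. V e (e *\<^sub>R rvec k)) P \<phi> / (\<Sum>k\<in>P. (\<phi> k)\<^sup>2)"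
  by (simp add: rayleigh_def linner_Hop[OF assms] linner_self[OF assms])

lemma lower_main:
  fixes a :: "int^'n \<Rightarrow> real^'n \<Rightarrow> real \<Rightarrow> real"
  shows "Sigma_ess a V e \<le> Liminf (at_infty_lat e) (\<lambda>k. LambdaR a V e R k)"
  unfolding Sigma_ess_def
proof (rule SUP_least)
  fix K :: "(int^'n) set" assume "K \<in> {K. finite K}"
  then have K: "finite K" by simp
  define D where "D = Max (insert 0 ((\<lambda>k. norm (e *\<^sub>R rvec k)) ` K))"
  have Dk: "norm (e *\<^sub>R rvec k) \<le> D" if "k \<in> K" for k
    unfolding D_def using K that by (intro Max_ge) auto
  show "(INF \<phi>\<in>{\<phi>\<in>c0 (UNIV - K). \<phi> \<noteq> (\<lambda>_. 0)}. ereal (rayleigh a V e \<phi>)) \<le> Liminf (at_infty_lat e) (\<lambda>k. LambdaR a V e R k)"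
  proof (rule Liminf_bounded)
    show "eventually (\<lambda>x. (INF \<phi>\<in>{\<phi>\<in>c0 (UNIV - K). \<phi> \<noteq> (\<lambda>_. 0)}. ereal (rayleigh a V e \<phi>)) \<le> LambdaR a V e R x) (at_infty_lat e)"
      unfolding at_infty_lat_def eventually_filtercomap
    proof (intro exI conjI allI impI)
      show "eventually (\<lambda>y. D + R \<le> y) at_top" by (rule eventually_ge_at_top)
      fix x :: "int^'n" assume x: "D + R \<le> norm (e *\<^sub>R rvec x)"
      have sub: "lball e x R \<subseteq> UNIV - K"
      proof
        fix l assume l: "l \<in> lball e x R"
        have "l \<notin> K"
        proof
          assume "l \<in> K"
          then have "norm (e *\<^sub>R rvec l) \<le> D" by (rule Dk)
          moreover have "dist (e *\<^sub>R rvec x) (e *\<^sub>R rvec l) < R" using l by (simp add: lball_def)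
          moreover have "norm (e *\<^sub>R rvec x) \<le> norm (e *\<^sub>R rvec l) + dist (e *\<^sub>R rvec x) (e *\<^sub>R rvec l)"
            by (metis dist_norm norm_triangle_sub add.commute)
          ultimately show False using x by linarith
        qed
        then show "l \<in> UNIV - K" by simp
      qed
      show "(INF \<phi>\<in>{\<phi>\<in>c0 (UNIV - K). \<phi> \<noteq> (\<lambda>_. 0)}. ereal (rayleigh a V e \<phi>)) \<le> LambdaR a V e R x"
        unfolding LambdaR_def
        by (rule INF_superset_mono) (use sub in \<open>auto simp: c0_def\<close>)
    qed
  qed
qed


lemma upper_main:
  fixes a :: "int^'n \<Rightarrow> real^'n \<Rightarrow> real \<Rightarrow> real" and V :: "real \<Rightarrow> real^'n \<Rightarrow> real"
    and e R B :: real and r :: int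
  assumes e: "0 < e"
    and Bd: "\<And>F x. finite F \<Longrightarrow> (\<Sum>l\<in>F. \<bar>a l (e *\<^sub>R rvec (x l)) e\<bar> * norm (rvec l)) \<le> B"
    and r: "1 \<le> r" and rR: "e * real CARD('n) * r \<le> R"
  shows "Liminf (at_infty_lat e) (\<lambda>k. LambdaR a V e R k) \<le> Sigma_ess a V e + ereal (real CARD('n) * B / r)"
proof (rule ccontr)
  define \<eta> where "\<eta> = real CARD('n) * B / r"
  define L where "L = Liminf (at_infty_lat e) (\<lambda>k. LambdaR a V e R k)"
  assume "\<not> ?thesis"
  then have lt: "Sigma_ess a V e + ereal \<eta> < L" by (simp add: L_def \<eta>_def not_le)
  obtain y where y1: "Sigma_ess a V e + ereal \<eta> < y" and y2: "y < L" using dense[OF lt] by blast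
  have "y \<noteq> \<infinity>" using y2 by auto
  moreover have "y \<noteq> -\<infinity>" using y1 by auto
  ultimately obtain y' where y': "y = ereal y'" by (cases y) auto
  have "eventually (\<lambda>x. y < LambdaR a V e R x) (at_infty_lat e)"
    using le_Liminf_iff[of L "at_infty_lat e" "\<lambda>k. LambdaR a V e R k"] y2 unfolding L_def by auto
  then obtain Q where Q: "eventually Q at_top" "\<forall>x. Q (norm (e *\<^sub>R rvec x)) \<longrightarrow> y < LambdaR a V e R x"
    unfolding at_infty_lat_def eventually_filtercomap by blast
  then obtain M where M: "\<And>n. n \<ge> M \<Longrightarrow> Q n" by (auto simp: eventually_at_top_linorder)
  define K where "K = {k::int^'n. norm (e *\<^sub>R rvec k) < M + R}"
  have Kf: "finite K" using finite_normball[OF e] by (simp add: K_def)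
  define IK where "IK = (INF \<phi>\<in>{\<phi>\<in>c0 (UNIV - K). \<phi> \<noteq> (\<lambda>_. 0)}. ereal (rayleigh a V e \<phi>))"
  have "IK \<le> Sigma_ess a V e" unfolding IK_def Sigma_ess_def by (rule SUP_upper) (simp add: Kf)
  then have "IK + ereal \<eta> \<le> Sigma_ess a V e + ereal \<eta>" by (rule add_right_mono)
  then have "IK + ereal \<eta> < ereal y'" using y1 y' by simp
  then have "IK < ereal (y' - \<eta>)" by (cases IK) auto
  then obtain \<phi> where \<phi>: "\<phi> \<in> c0 (UNIV - K)" "\<phi> \<noteq> (\<lambda>_. 0)" and r\<phi>: "rayleigh a V e \<phi> < y' - \<eta>"
    unfolding IK_def INF_less_iff by auto
  define P where "P = {k. \<phi> k \<noteq> 0}"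
  have P: "finite P" using \<phi> by (simp add: c0_def P_def)
  have Pz: "\<And>k. k \<notin> P \<Longrightarrow> \<phi> k = 0" by (simp add: P_def)
  obtain k1 where k1: "\<phi> k1 \<noteq> 0" using \<phi>(2) by auto
  have nz: "0 < (\<Sum>k\<in>P. (\<phi> k)\<^sup>2)" by (rule sum_pos2[OF P, of k1]) (use k1 in \<open>auto simp: P_def\<close>)
  define A where "A = (\<lambda>l k. a l (e *\<^sub>R rvec k) e)"
  define Wv where "Wv = (\<lambda>k. V e (e *\<^sub>R rvec k))"
  have BdA: "\<And>F x. finite F \<Longrightarrow> (\<Sum>l\<in>F. \<bar>A l (x l)\<bar> * norm (rvec l)) \<le> B" using Bd by (simp add: A_def)
  have ex: "\<exists>\<psi> t. (\<forall>k. \<psi> k \<noteq> 0 \<longrightarrow> \<phi> k \<noteq> 0 \<and> (\<forall>j\<in>UNIV. t j \<le> k$j \<and> k$j < t j + r)) \<and>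
     0 < (\<Sum>k\<in>P. (\<psi> k)\<^sup>2) \<and>
     Qf A Wv P \<psi> \<le> (Qf A Wv P \<phi> / (\<Sum>k\<in>P. (\<phi> k)\<^sup>2) + real (card (UNIV::'n set)) * B / r) * (\<Sum>k\<in>P. (\<psi> k)\<^sup>2)"
    apply (rule locd[where A=A and W=Wv and B=B and J=UNIV])
        apply (rule P)
       apply (rule nz)
      apply (erule BdA)
     apply (rule r)
    apply simp
    done
  obtain \<psi> t where H: "(\<forall>k. \<psi> k \<noteq> 0 \<longrightarrow> \<phi> k \<noteq> 0 \<and> (\<forall>j\<in>UNIV. t j \<le> k$j \<and> k$j < t j + r)) \<and>
     0 < (\<Sum>k\<in>P. (\<psi> k)\<^sup>2) \<and>
     Qf A Wv P \<psi> \<le> (Qf A Wv P \<phi> / (\<Sum>k\<in>P. (\<phi> k)\<^sup>2) + real (card (UNIV::'n set)) * B / r) * (\<Sum>k\<in>P. (\<psi> k)\<^sup>2)"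
    using ex by (elim exE) (erule that)
  have sp: "\<forall>k. \<psi> k \<noteq> 0 \<longrightarrow> \<phi> k \<noteq> 0 \<and> (\<forall>j\<in>UNIV. t j \<le> k$j \<and> k$j < t j + r)"
    using H by (rule conjunct1)
  have pos: "0 < (\<Sum>k\<in>P. (\<psi> k)\<^sup>2)" using H by (rule conjunct1[OF conjunct2])
  have q: "Qf A Wv P \<psi> \<le> (Qf A Wv P \<phi> / (\<Sum>k\<in>P. (\<phi> k)\<^sup>2) + real (card (UNIV::'n set)) * B / r) * (\<Sum>k\<in>P. (\<psi> k)\<^sup>2)"
    using H by (rule conjunct2[OF conjunct2])
  have \<psi>z: "\<And>k. k \<notin> P \<Longrightarrow> \<psi> k = 0" using sp by (auto simp: P_def)
  have r\<psi>: "rayleigh a V e \<psi> \<le> rayleigh a V e \<phi> + \<eta>"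
  proof -
    have "rayleigh a V e \<psi> = Qf A Wv P \<psi> / (\<Sum>k\<in>P. (\<psi> k)\<^sup>2)"
      unfolding A_def Wv_def by (rule rayleigh_Qf[OF P \<psi>z])
    also have "\<dots> \<le> Qf A Wv P \<phi> / (\<Sum>k\<in>P. (\<phi> k)\<^sup>2) + real (card (UNIV::'n set)) * B / r"
      using q pos by (simp add: pos_divide_le_eq)
    also have "Qf A Wv P \<phi> / (\<Sum>k\<in>P. (\<phi> k)\<^sup>2) = rayleigh a V e \<phi>"
      unfolding A_def Wv_def by (rule rayleigh_Qf[OF P Pz, symmetric])
    finally show ?thesis by (simp add: \<eta>_def)
  qed
  define x :: "int^'n" where "x = (\<chi> j. t j)"
  have dist: "dist (e *\<^sub>R rvec x) (e *\<^sub>R rvec k) < R" if "\<psi> k \<noteq> 0" for k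
  proof -
    have cube: "t j \<le> k$j \<and> k$j < t j + r" for j using sp that by auto
    have "norm (rvec x - rvec k) \<le> (\<Sum>j\<in>UNIV. \<bar>(rvec x - rvec k)$j\<bar>)" by (rule norm_le_l1_cart)
    also have "\<dots> \<le> (\<Sum>j\<in>(UNIV::'n set). real_of_int (r - 1))"
    proof (rule sum_mono)
      fix j
      have "\<bar>t j - k$j\<bar> \<le> r - 1" using cube[of j] by auto
      then show "\<bar>(rvec x - rvec k)$j\<bar> \<le> real_of_int (r - 1)"
        by (simp add: x_def rvec_def)
    qed
    also have "\<dots> = real CARD('n) * (r - 1)" by simp
    finally have n: "norm (rvec x - rvec k) \<le> real CARD('n) * (r - 1)" .
    have "dist (e *\<^sub>R rvec x) (e *\<^sub>R rvec k) = e * norm (rvec x - rvec k)"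
      using e by (simp add: dist_norm scaleR_diff_right[symmetric])
    also have "\<dots> \<le> e * (real CARD('n) * (r - 1))" using n e by (intro mult_left_mono) auto
    also have "\<dots> < e * real CARD('n) * r" using e by (simp add: algebra_simps)
    also have "\<dots> \<le> R" by (rule rR)
    finally show ?thesis .
  qed
  have inball: "\<psi> \<in> c0 (lball e x R)"
    unfolding c0_def lball_def using \<psi>z dist by (auto intro: finite_subset[OF _ P])
  obtain k0 where k0: "\<psi> k0 \<noteq> 0"
  proof (rule ccontr)
    assume "\<not> thesis"
    then have "\<forall>k. \<psi> k = 0" using that by blast
    then show False using pos by simp
  qed
  have \<psi>ne: "\<psi> \<noteq> (\<lambda>_. 0)" using k0 by auto
  have "LambdaR a V e R x \<le> ereal (rayleigh a V e \<psi>)"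
    unfolding LambdaR_def by (rule INF_lower) (use inball \<psi>ne in auto)
  also have "\<dots> < y" using r\<psi> r\<phi> y' by simp
  finally have lt2: "LambdaR a V e R x < y" .
  have "\<phi> k0 \<noteq> 0" using sp k0 by auto
  then have "k0 \<notin> K" using \<phi>(1) by (auto simp: c0_def)
  then have "M + R \<le> norm (e *\<^sub>R rvec k0)" by (simp add: K_def)
  moreover have "norm (e *\<^sub>R rvec k0) \<le> norm (e *\<^sub>R rvec x) + dist (e *\<^sub>R rvec x) (e *\<^sub>R rvec k0)"
    by (metis dist_commute dist_norm norm_triangle_sub)
  ultimately have "M \<le> norm (e *\<^sub>R rvec x)" using dist[OF k0] by linarith
  then have "y < LambdaR a V e R x" using Q(2) M by blast
  with lt2 show False by simp
qed




theorem lemmaB3: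
  fixes a :: "int^'n \<Rightarrow> real^'n \<Rightarrow> real \<Rightarrow> real"
    and a0 a1 :: "int^'n \<Rightarrow> real^'n \<Rightarrow> real"
    and R2 :: "int^'n \<Rightarrow> real^'n \<Rightarrow> real \<Rightarrow> real"
    and V :: "real \<Rightarrow> real^'n \<Rightarrow> real"
    and V0 V1 :: "real^'n \<Rightarrow> real"
    and RV :: "real^'n \<Rightarrow> real \<Rightarrow> real"
    and \<epsilon>0 \<epsilon> :: real
  assumes
    \<comment> \<open>(a)(i)\<close>
    a_exp: "\<And>k x e. 0 < e \<Longrightarrow> e \<le> 1 \<Longrightarrow> a k x e = a0 k x + e * a1 k x + R2 k x e"
  and a0_smooth: "\<And>k. smooth_on UNIV (a0 k)"
  and a1_smooth: "\<And>k. smooth_on UNIV (a1 k)"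
  and a0_lip: "\<exists>C. \<forall>k x h. \<bar>a0 k x - a0 k (x + h)\<bar> \<le> C * norm h"
  and a1_lip: "\<exists>C. \<forall>k x h. \<bar>a1 k x - a1 k (x + h)\<bar> \<le> C * norm h"
  and R2_smooth: "\<And>k. smooth_on (UNIV \<times> {0<..1}) (\<lambda>p. R2 k (fst p) (snd p))"
    \<comment> \<open>(a)(ii)\<close>
  and a0_sum: "\<And>x. ((\<lambda>k. a0 k x) has_sum 0) UNIV"
  and a0_nonpos: "\<And>k x. k \<noteq> 0 \<Longrightarrow> a0 k x \<le> 0"
    \<comment> \<open>(a)(iii)\<close>
  and a_sym: "\<And>k x e. 0 < e \<Longrightarrow> e \<le> 1 \<Longrightarrow> a k x e = a (- k) (x + e *\<^sub>R rvec k) e"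
    \<comment> \<open>(a)(iv): weighted l^2 bounds (squared norms, via finite partial sums)\<close>
  and a0_decay: "\<And>(n::nat) vs. set vs \<subseteq> Basis \<Longrightarrow> \<exists>C. \<forall>x F. finite F \<longrightarrow>
        (\<Sum>k\<in>F. (norm (rvec k) ^ n * pds UNIV vs (a0 k) x)\<^sup>2) \<le> C"
  and a1_decay: "\<And>(n::nat) vs. set vs \<subseteq> Basis \<Longrightarrow> \<exists>C. \<forall>x F. finite F \<longrightarrow>
        (\<Sum>k\<in>F. (norm (rvec k) ^ n * pds UNIV vs (a1 k) x)\<^sup>2) \<le> C"
  and R2_decay: "\<And>(n::nat) vs. set vs \<subseteq> Basis \<Longrightarrow> \<exists>C. \<forall>x e F. 0 < e \<longrightarrow> e \<le> 1 \<longrightarrow> finite F \<longrightarrow>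
        (\<Sum>k\<in>F. (norm (rvec k) ^ n * pds UNIV vs (\<lambda>y. R2 k y e) x)\<^sup>2) \<le> (C * e\<^sup>2)\<^sup>2"
    \<comment> \<open>(a)(v)\<close>
  and a0_span: "\<And>x. span {rvec k | k. a0 k x < 0} = UNIV"
    \<comment> \<open>(b)\<close>
  and eps0_pos: "0 < \<epsilon>0"
  and V_exp: "\<And>e x. 0 < e \<Longrightarrow> e \<le> \<epsilon>0 \<Longrightarrow> V e x = V0 x + e * V1 x + RV x e"
  and V0_smooth: "smooth_on UNIV V0"
  and V1_smooth: "smooth_on UNIV V1"
  and RV_smooth: "smooth_on (UNIV \<times> {0<..\<epsilon>0}) (\<lambda>p. RV (fst p) (snd p))"
  and RV_small: "\<And>K. compact K \<Longrightarrow> \<exists>C. \<forall>e x. 0 < e \<longrightarrow> e \<le> \<epsilon>0 \<longrightarrow> x \<in> K \<longrightarrow> \<bar>RV x e\<bar> \<le> C * e\<^sup>2"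
  and V_poly: "\<And>e. 0 < e \<Longrightarrow> e \<le> \<epsilon>0 \<Longrightarrow>
        \<exists>C (N::nat). \<forall>k. \<bar>V e (e *\<^sub>R rvec k)\<bar> \<le> C * (1 + norm (e *\<^sub>R rvec k)) ^ N"
  and V_pos_infty: "\<exists>C R. C > 0 \<and> (\<forall>e k. 0 < e \<longrightarrow> e \<le> \<epsilon>0 \<longrightarrow> norm (e *\<^sub>R rvec k) \<ge> R
        \<longrightarrow> V e (e *\<^sub>R rvec k) > C)"
  and V0_nonneg: "\<And>x. V0 x \<ge> 0"
  and V0_zeros_finite: "finite {x. V0 x = 0}"
  and V0_hess: "\<And>z v. V0 z = 0 \<Longrightarrow> v \<noteq> 0 \<Longrightarrow>
        (\<Sum>i\<in>UNIV. \<Sum>j\<in>UNIV. v $ i * v $ j * pds UNIV [axis i 1, axis j 1] V0 z) > 0"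
    \<comment> \<open>(c)\<close>
  and t0_pos: "\<And>z \<xi>. V0 z = 0 \<Longrightarrow> \<not> (\<forall>i. \<exists>m::int. \<xi> $ i = 2 * pi * of_int m) \<Longrightarrow>
        t0 a0 z \<xi> \<in> \<real> \<and> Re (t0 a0 z \<xi>) > 0"
    \<comment> \<open>the fixed semiclassical parameter\<close>
  and eps: "0 < \<epsilon>" "\<epsilon> \<le> 1" "\<epsilon> \<le> \<epsilon>0"
  shows "((\<lambda>R. Liminf (at_infty_lat \<epsilon>) (\<lambda>k. LambdaR a V \<epsilon> R k))
           \<longlongrightarrow> Sigma_ess a V \<epsilon>) at_top"
proof -
  define n where "n = 2*CARD('n)+1"
  obtain C0 where C0: "\<forall>x F. finite F \<longrightarrow> (\<Sum>k\<in>F. (norm (rvec k) ^ n * pds UNIV [] (a0 k) x)\<^sup>2) \<le> C0"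
    using a0_decay[of "[]" n] by auto
  obtain C1 where C1: "\<forall>x F. finite F \<longrightarrow> (\<Sum>k\<in>F. (norm (rvec k) ^ n * pds UNIV [] (a1 k) x)\<^sup>2) \<le> C1"
    using a1_decay[of "[]" n] by auto
  obtain C2 where C2: "\<forall>x e F. 0 < e \<longrightarrow> e \<le> 1 \<longrightarrow> finite F \<longrightarrow>
        (\<Sum>k\<in>F. (norm (rvec k) ^ n * pds UNIV [] (\<lambda>y. R2 k y e) x)\<^sup>2) \<le> (C2 * e\<^sup>2)\<^sup>2"
    using R2_decay[of "[]" n] by auto
  have sq: "\<bar>y\<bar> \<le> sqrt c" if "y\<^sup>2 \<le> c" for y c :: real
    using real_sqrt_le_mono[OF that] by simp
  have b0: "\<bar>norm (rvec l)^n * a0 l x\<bar> \<le> sqrt C0" for l x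
  proof -
    have "(\<Sum>k\<in>{l}. (norm (rvec k) ^ n * pds UNIV [] (a0 k) x)\<^sup>2) \<le> C0" using C0 by blast
    then show ?thesis by (intro sq) simp
  qed
  have b1: "\<bar>norm (rvec l)^n * a1 l x\<bar> \<le> sqrt C1" for l x
  proof -
    have "(\<Sum>k\<in>{l}. (norm (rvec k) ^ n * pds UNIV [] (a1 k) x)\<^sup>2) \<le> C1" using C1 by blast
    then show ?thesis by (intro sq) simp
  qed
  have b2: "\<bar>norm (rvec l)^n * R2 l x \<epsilon>\<bar> \<le> \<bar>C2 * \<epsilon>\<^sup>2\<bar>" for l x
  proof -
    have "(\<Sum>k\<in>{l}. (norm (rvec k) ^ n * pds UNIV [] (\<lambda>y. R2 k y \<epsilon>) x)\<^sup>2) \<le> (C2 * \<epsilon>\<^sup>2)\<^sup>2"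
      using C2 eps by blast
    then have "\<bar>norm (rvec l)^n * R2 l x \<epsilon>\<bar> \<le> sqrt ((C2 * \<epsilon>\<^sup>2)\<^sup>2)" by (intro sq) simp
    then show ?thesis by simp
  qed
  define Bn where "Bn = sqrt C0 + \<epsilon> * sqrt C1 + \<bar>C2 * \<epsilon>\<^sup>2\<bar>"
  have BnA: "norm (rvec l)^(2*CARD('n)+1) * \<bar>a l (\<epsilon> *\<^sub>R rvec k) \<epsilon>\<bar> \<le> Bn" for l k
  proof -
    define x where "x = \<epsilon> *\<^sub>R rvec k"
    define N where "N = norm (rvec l)^n"
    have N0: "0 \<le> N" by (simp add: N_def)
    have ax: "a l x \<epsilon> = a0 l x + \<epsilon> * a1 l x + R2 l x \<epsilon>" using a_exp eps by simp
    have eqa: "N * a l x \<epsilon> = N * a0 l x + \<epsilon> * (N * a1 l x) + N * R2 l x \<epsilon>"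
      unfolding ax by (simp add: algebra_simps)
    have "N * \<bar>a l x \<epsilon>\<bar> = \<bar>N * a l x \<epsilon>\<bar>" using N0 by (simp add: abs_mult)
    also have "\<dots> = \<bar>N * a0 l x + \<epsilon> * (N * a1 l x) + N * R2 l x \<epsilon>\<bar>" by (simp only: eqa)
    also have "\<dots> \<le> \<bar>N * a0 l x\<bar> + \<bar>\<epsilon> * (N * a1 l x)\<bar> + \<bar>N * R2 l x \<epsilon>\<bar>"
      by (rule order.trans[OF abs_triangle_ineq add_right_mono[OF abs_triangle_ineq]])
    also have "\<dots> = \<bar>N * a0 l x\<bar> + \<epsilon> * \<bar>N * a1 l x\<bar> + \<bar>N * R2 l x \<epsilon>\<bar>"
      using eps by (simp add: abs_mult)
    also have "\<dots> \<le> Bn"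
      unfolding Bn_def N_def using b0 b1 b2 eps by (intro add_mono mult_left_mono) auto
    finally show ?thesis by (simp add: N_def n_def x_def)
  qed
  define B where "B = Bn * 5^CARD('n)"
  have Bd: "(\<Sum>l\<in>F. \<bar>a l (\<epsilon> *\<^sub>R rvec (x l)) \<epsilon>\<bar> * norm (rvec l)) \<le> B" if F: "finite F" for F and x :: "int^'n \<Rightarrow> int^'n"
    unfolding B_def
    apply (rule sum_bound[where A="\<lambda>l k. a l (\<epsilon> *\<^sub>R rvec k) \<epsilon>"])
     apply (rule BnA)
    apply (rule F)
    done
  define rf where "rf R = \<lfloor>R / (\<epsilon> * real CARD('n))\<rfloor>" for R
  define L where "L R = Liminf (at_infty_lat \<epsilon>) (\<lambda>k. LambdaR a V \<epsilon> R k)" for R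
  define S where "S = Sigma_ess a V \<epsilon>"
  have dpos: "0 < real CARD('n)" by simp
  have ed: "0 < \<epsilon> * real CARD('n)" using eps dpos by simp
  have up: "L R \<le> S + ereal (real CARD('n) * B / rf R)" if R: "\<epsilon> * real CARD('n) \<le> R" for R
  proof -
    have "1 \<le> R / (\<epsilon> * real CARD('n))" using R ed by (simp add: le_divide_eq)
    then have r1: "1 \<le> rf R" unfolding rf_def by (simp add: le_floor_iff)
    have "real_of_int (rf R) \<le> R / (\<epsilon> * real CARD('n))" unfolding rf_def by (rule of_int_floor_le)
    then have rR: "\<epsilon> * real CARD('n) * rf R \<le> R" using ed by (simp add: le_divide_eq mult.commute)
    show ?thesis unfolding L_def S_def
      apply (rule upper_main)
         apply (rule eps(1))
        apply (erule Bd)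
       apply (rule r1)
      apply (rule rR)
      done
  qed
  have low: "S \<le> L R" for R unfolding S_def L_def by (rule lower_main)
  show ?thesis
    unfolding L_def[symmetric] S_def[symmetric]
  proof (rule order_tendstoI)
    fix y assume "y < S"
    then show "eventually (\<lambda>R. y < L R) at_top"
      using low by (intro always_eventually) (metis less_le_trans)
  next
    fix y assume y: "S < y"
    have ev: "eventually (\<lambda>R. S + ereal (real CARD('n) * B / rf R) < y \<and> \<epsilon> * real CARD('n) \<le> R) at_top"
    proof (cases S)
      case (real s)
      show ?thesis
      proof (cases y)
        case (real y')
        define \<delta> where "\<delta> = y' - s"
        have \<delta>: "0 < \<delta>" using y real \<open>S = ereal s\<close> by (simp add: \<delta>_def)
        define R0 where "R0 = \<epsilon> * real CARD('n) * (real CARD('n) * \<bar>B\<bar> / \<delta> + 2)"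
        have "eventually (\<lambda>R. R0 \<le> R) at_top" by (rule eventually_ge_at_top)
        then show ?thesis
        proof (rule eventually_mono)
          fix R assume R: "R0 \<le> R"
          have q0: "0 \<le> real CARD('n) * \<bar>B\<bar> / \<delta>" using \<delta> by simp
          have "real CARD('n) * \<bar>B\<bar> / \<delta> + 2 \<le> R / (\<epsilon> * real CARD('n))"
            using R ed unfolding R0_def by (simp add: le_divide_eq mult.commute)
          moreover have "R / (\<epsilon> * real CARD('n)) < real_of_int (rf R) + 1"
            unfolding rf_def by (rule real_of_int_floor_add_one_gt)
          ultimately have rg: "real CARD('n) * \<bar>B\<bar> / \<delta> + 1 < real_of_int (rf R)" by linarith
          have rpos: "0 < real_of_int (rf R)" using rg q0 by linarith
          have rg2: "real CARD('n) * \<bar>B\<bar> / \<delta> < real_of_int (rf R)" using rg by linarith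
          have "real CARD('n) * \<bar>B\<bar> < real_of_int (rf R) * \<delta>"
            using rg2 \<delta> by (simp only: divide_less_eq)
          then have "real CARD('n) * \<bar>B\<bar> < \<delta> * real_of_int (rf R)" by (simp add: mult.commute)
          then have "real CARD('n) * \<bar>B\<bar> / real_of_int (rf R) < \<delta>"
            using rpos by (simp add: divide_less_eq)
          moreover have "real CARD('n) * B / real_of_int (rf R) \<le> real CARD('n) * \<bar>B\<bar> / real_of_int (rf R)"
            using rpos by (intro divide_right_mono mult_left_mono) auto
          ultimately have "real CARD('n) * B / real_of_int (rf R) < \<delta>" by (meson le_less_trans)
          then have "S + ereal (real CARD('n) * B / rf R) < y"
            using real \<open>S = ereal s\<close> by (simp add: \<delta>_def)
          moreover have "\<epsilon> * real CARD('n) \<le> R"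
          proof -
            have "\<epsilon> * real CARD('n) * 1 \<le> \<epsilon> * real CARD('n) * (real CARD('n) * \<bar>B\<bar> / \<delta> + 2)"
              using ed q0 by (intro mult_left_mono) auto
            then show ?thesis using R unfolding R0_def by simp
          qed
          ultimately show "S + ereal (real CARD('n) * B / rf R) < y \<and> \<epsilon> * real CARD('n) \<le> R" by blast
        qed
      next
        case PInf
        then show ?thesis using \<open>S = ereal s\<close> by (auto intro: eventually_ge_at_top)
      next
        case MInf
        then show ?thesis using y by simp
      qed
    next
      case PInf
      then show ?thesis using y by simp
    next
      case MInf
      have "y \<noteq> -\<infinity>" using y by auto
      then show ?thesis using MInf by (auto intro: eventually_ge_at_top)
    qed
    then show "eventually (\<lambda>R. L R < y) at_top"
    proof (rule eventually_mono)
      fix R assume "S + ereal (real CARD('n) * B / rf R) < y \<and> \<epsilon> * real CARD('n) \<le> R"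
      then show "L R < y" using up[of R] by auto
    qed
  qed
qed


end
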